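(* Let $d\ge 1$, $\alpha>\beta>d$, $a,b>0$, and $\phi(r)=a r^{-\alpha}-b r^{-\beta}$ for $r>0$. For $L\in\mathcal L_d(1)$ set $$\lambda^\phi_L:=\left(\frac{\alpha a\,\zeta_L(\alpha)}{\beta b\,\zeta_L(\beta)}\right)^{\frac1{\alpha-\beta}},$$ which is the unique minimizer of $\lambda\mapsto E_\phi[\lambda L]$ on $(0,\infty)$. Suppose that $L_d\in\mathcal L_d(1)$ is a minimizer of $L\mapsto\zeta_L(\beta)$ on $\mathcal L_d(1)$ and that $\lambda^\phi_{L_d}L_d$ is the unique (up to isometries) global minimizer of $E_\phi$ on $\mathcal L_d$. Then $L_d$ is the unique (up to isometries) minimizer of $L\mapsto\lambda^\phi_L$ on $\mathcal L_d(1)$; that is, $\lambda^\phi_L\ge\lambda^\phi_{L_d}$ for all $L\in\mathcal L_d(1)$, with equality only if $L$ is isometric to $L_d$.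
   Context: $\mathcal L_d$ denotes the set of all lattices $L=\bigoplus_{i=1}^d\mathbb Z u_i$ with $\{u_i\}$ a basis of $\mathbb R^d$, and $\mathcal L_d(1)\subset\mathcal L_d$ the lattices with $|\det(u_1,\dots,u_d)|=1$. For $s>d$, the Epstein zeta function is $\zeta_L(s)=\sum_{q\in L\setminus\{0\}}|q|^{-s}$. For a function $f:(0,\infty)\to\mathbb R$ with $|f(r)|=O(r^{-d-\eta})$ as $r\to\infty$ for some $\eta>0$, $E_f[L]:=\sum_{q\in L\setminus\{0\}}f(|q|)$. Uniqueness of minimizers among lattices is always understood up to isometries. *)

theory Defs
  imports "HOL-Analysis.Analysis"
begin

text \<open>Lattices in R^d, with d = CARD('n). A lattice is the set of integer
combinations of a basis u_1..u_d (indexed by the finite type 'n).\<close>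

definition lattice_gen :: "('n::finite \<Rightarrow> real^'n) \<Rightarrow> (real^'n) set" where
  "lattice_gen u = {(\<Sum>i\<in>UNIV. of_int (c i) *\<^sub>R u i) | c :: 'n \<Rightarrow> int. True}"

definition is_basis_family :: "('n::finite \<Rightarrow> real^'n) \<Rightarrow> bool" where
  "is_basis_family u \<longleftrightarrow> inj u \<and> independent (range u) \<and> span (range u) = UNIV"

definition is_lattice :: "(real^'n::finite) set \<Rightarrow> bool" where
  "is_lattice L \<longleftrightarrow> (\<exists>u. is_basis_family u \<and> L = lattice_gen u)"

definition is_unimodular_lattice :: "(real^'n::finite) set \<Rightarrow> bool" where
  "is_unimodular_lattice L \<longleftrightarrow>
     (\<exists>u. is_basis_family u \<and> L = lattice_gen u \<and> \<bar>det (\<chi> i. u i)\<bar> = 1)"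

definition epstein_zeta :: "(real^'n::finite) set \<Rightarrow> real \<Rightarrow> real" where
  "epstein_zeta L s = (\<Sum>\<^sub>\<infinity>q\<in>L - {0}. norm q powr (-s))"

definition lattice_energy :: "(real \<Rightarrow> real) \<Rightarrow> (real^'n::finite) set \<Rightarrow> real" where
  "lattice_energy f L = (\<Sum>\<^sub>\<infinity>q\<in>L - {0}. f (norm q))"

definition scale_lattice :: "real \<Rightarrow> (real^'n::finite) set \<Rightarrow> (real^'n) set" where
  "scale_lattice t L = (\<lambda>q. t *\<^sub>R q) ` L"

text \<open>Isometric lattices: related by a linear isometry (lattices contain 0).\<close>
definition isometric_lattices :: "(real^'n::finite) set \<Rightarrow> (real^'n) set \<Rightarrow> bool" where
  "isometric_lattices L M \<longleftrightarrow> (\<exists>T. orthogonal_transformation T \<and> T ` L = M)"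

definition lj_lambda :: "real \<Rightarrow> real \<Rightarrow> real \<Rightarrow> real \<Rightarrow> (real^'n::finite) set \<Rightarrow> real" where
  "lj_lambda a b \<alpha> \<beta> L =
     ((\<alpha> * a * epstein_zeta L \<alpha>) / (\<beta> * b * epstein_zeta L \<beta>)) powr (1 / (\<alpha> - \<beta>))"

end

theory Submission
  imports Defs "HOL-Analysis.Analysis"
begin


lemma int_powr_summable:
  fixes t :: real assumes t: "t > 1"
  shows "(\<lambda>k::int. (1 + \<bar>real_of_int k\<bar>) powr (-t)) summable_on UNIV"
proof -
  have s0: "summable (\<lambda>n. real n powr (-t))"
    using t by (subst summable_real_powr_iff) simp
  have s1: "summable (\<lambda>n. real (Suc n) powr (-t))"
    using s0 by (subst summable_Suc_iff)
  have nat: "(\<lambda>n::nat. (1 + real n) powr (-t)) summable_on UNIV"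
    using s1 by (subst summable_on_UNIV_nonneg_real_iff) (auto simp: add.commute)
  let ?g = "\<lambda>k::int. (1 + \<bar>real_of_int k\<bar>) powr (-t)"
  have A: "?g summable_on (int ` UNIV)"
    by (subst summable_on_reindex) (auto simp: o_def nat)
  have B: "?g summable_on ((\<lambda>n. - int n) ` UNIV)"
    by (subst summable_on_reindex) (auto simp: o_def nat inj_on_def)
  have X: "x \<in> int ` UNIV \<union> (\<lambda>n. - int n) ` UNIV" for x :: int
  proof (cases "x \<ge> 0")
    case True then show ?thesis by (intro UnI1, rule_tac x="nat x" in image_eqI) auto
  next
    case False then show ?thesis by (intro UnI2, rule_tac x="nat (-x)" in image_eqI) auto
  qed
  have U: "UNIV = int ` UNIV \<union> (\<lambda>n. - int n) ` UNIV" using X by blast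
  show ?thesis by (subst U, rule summable_on_union[OF A B])
qed

lemma prod_summable:
  fixes t :: real assumes t: "t > 1"
  shows "(\<lambda>c::'n::finite \<Rightarrow> int. \<Prod>i\<in>UNIV. (1 + \<bar>real_of_int (c i)\<bar>) powr (-t)) summable_on UNIV"
proof -
  have "Infinite_Set_Sum.abs_summable_on (\<lambda>k::int. (1 + \<bar>real_of_int k\<bar>) powr (-t)) UNIV"
    using int_powr_summable[OF t] by (intro abs_summable_equivalent[THEN iffD1]) simp
  then have "Infinite_Set_Sum.abs_summable_on (\<lambda>c::'n \<Rightarrow> int. \<Prod>i\<in>UNIV. (1 + \<bar>real_of_int (c i)\<bar>) powr (-t)) (PiE UNIV (\<lambda>_. UNIV))"
    by (intro abs_summable_on_prod_PiE) auto
  then have "Infinite_Set_Sum.abs_summable_on (\<lambda>c::'n \<Rightarrow> int. \<Prod>i\<in>UNIV. (1 + \<bar>real_of_int (c i)\<bar>) powr (-t)) UNIV"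
    by simp
  then have "(\<lambda>x. norm ((\<lambda>c::'n \<Rightarrow> int. \<Prod>i\<in>UNIV. (1 + \<bar>real_of_int (c i)\<bar>) powr (-t)) x)) summable_on UNIV"
    by (rule abs_summable_equivalent[THEN iffD2])
  then show ?thesis by (rule abs_summable_summable)
qed


definition latmap :: "('n::finite \<Rightarrow> real^'n) \<Rightarrow> real^'n \<Rightarrow> real^'n" where
  "latmap u x = (\<Sum>i\<in>UNIV. (x $ i) *\<^sub>R u i)"

lemma latmap_linear: "linear (latmap u)"
  unfolding latmap_def
  by (auto intro!: linearI simp: algebra_simps sum.distrib scaleR_sum_right)

lemma latmap_inj:
  assumes "is_basis_family u" shows "inj (latmap u)"
proof -
  have iu: "inj u" and ind: "independent (range u)"
    using assms by (auto simp: is_basis_family_def)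
  have "x = 0" if "latmap u x = 0" for x
  proof -
    define c where "c v = x $ (inv u v)" for v
    have "(\<Sum>v\<in>range u. c v *\<^sub>R v) = (\<Sum>i\<in>UNIV. c (u i) *\<^sub>R u i)"
      using iu by (simp add: sum.reindex)
    also have "\<dots> = latmap u x"
      using iu by (simp add: c_def latmap_def)
    finally have "(\<Sum>v\<in>range u. c v *\<^sub>R v) = 0" using that by simp
    with ind have "\<forall>v\<in>range u. c v = 0"
      by (simp add: independent_explicit)
    then have "x $ i = 0" for i using iu by (auto simp: c_def)
    then show ?thesis by (simp add: vec_eq_iff)
  qed
  then show ?thesis by (simp add: linear_injective_0[OF latmap_linear])
qed

definition ivec :: "('n::finite \<Rightarrow> int) \<Rightarrow> real^'n" where
  "ivec c = (\<chi> i. real_of_int (c i))"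

lemma lattice_gen_range: "lattice_gen u = range (\<lambda>c. latmap u (ivec c))"
  by (auto simp: lattice_gen_def latmap_def ivec_def)

lemma zeta_summable:
  fixes u :: "'n::finite \<Rightarrow> real^'n"
  assumes bas: "is_basis_family u" and s: "s > real CARD('n)"
  shows "(\<lambda>q. norm q powr (-s)) summable_on lattice_gen u"
proof -
  define h where "h c = latmap u (ivec c)" for c
  have injh: "inj h"
  proof -
    have "inj (ivec :: ('n \<Rightarrow> int) \<Rightarrow> real^'n)"
      unfolding inj_def ivec_def vec_eq_iff by (simp add: fun_eq_iff)
    from inj_compose[OF latmap_inj[OF bas] this]
    have "inj (\<lambda>x. latmap u (ivec x))" by (simp add: o_def)
    moreover have "h = (\<lambda>x. latmap u (ivec x))" by (simp add: h_def fun_eq_iff)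
    ultimately show ?thesis by simp
  qed
  obtain B where B: "B > 0" "\<And>x. B * norm x \<le> norm (latmap u x)"
    using linear_inj_bounded_below_pos[OF latmap_linear latmap_inj[OF bas]] by blast
  define n where "n = real CARD('n)"
  have n1: "n \<ge> 1" unfolding n_def by (simp add: Suc_le_eq)
  define t where "t = s / n"
  have t1: "t > 1" using s n1 unfolding t_def n_def by (simp add: field_simps)
  have s0: "s > 0" using s n1 n_def by linarith
  define K where "K = B powr (-s) * 2 powr s"
  define P where "P c = (\<Prod>i\<in>UNIV. (1 + \<bar>real_of_int (c i)\<bar>) powr (-t))" for c :: "'n \<Rightarrow> int"
  have bound: "norm (h c) powr (-s) \<le> K * P c" for c
  proof (cases "c = (\<lambda>_. 0)")
    case True
    then have "h c = 0" by (simp add: h_def ivec_def latmap_def)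
    then show ?thesis by (simp add: K_def P_def prod_nonneg)
  next
    case False
    define N where "N = norm (ivec c)"
    obtain j where j: "c j \<noteq> 0" using False by auto
    have comp: "\<bar>real_of_int (c i)\<bar> \<le> N" for i
      using component_le_norm_cart[of "ivec c" i] by (simp add: N_def ivec_def)
    have N1: "N \<ge> 1" using comp[of j] j by linarith
    have BN: "B * N \<le> norm (h c)" using B(2) by (simp add: h_def N_def)
    have "norm (h c) powr (-s) \<le> (B * N) powr (-s)"
      using BN B(1) N1 s0 by (intro powr_mono2') auto
    also have "\<dots> = B powr (-s) * N powr (-s)"
      using B(1) N1 by (simp add: powr_mult)
    also have "N powr (-s) = 2 powr s * (2 * N) powr (-s)"
      using N1 by (simp add: powr_mult powr_minus field_simps)
    also have "(2 * N) powr (-s) = ((2 * N) powr n) powr (-t)"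
      using n1 by (simp add: powr_powr t_def)
    also have "\<dots> \<le> (\<Prod>i\<in>UNIV. (1 + \<bar>real_of_int (c i)\<bar>)) powr (-t)"
    proof (rule powr_mono2')
      show "-t \<le> 0" using t1 by simp
      show "0 < (\<Prod>i\<in>UNIV. (1 + \<bar>real_of_int (c i)\<bar>))"
        by (intro prod_pos) auto
      have "(\<Prod>i\<in>UNIV. (1 + \<bar>real_of_int (c i)\<bar>)) \<le> (\<Prod>i\<in>(UNIV::'n set). 2 * N)"
        using N1 comp by (intro prod_mono) (smt (verit))
      also have "\<dots> = (2 * N) ^ CARD('n)" by simp
      also have "\<dots> = (2 * N) powr n"
        using N1 by (simp add: n_def powr_realpow)
      finally show "(\<Prod>i\<in>UNIV. (1 + \<bar>real_of_int (c i)\<bar>)) \<le> (2 * N) powr n" .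
    qed
    also have "\<dots> = P c" by (simp add: P_def prod_powr_distrib)
    finally show ?thesis
      using B(1) by (simp add: K_def mult_left_mono mult.assoc)
  qed
  have "(\<lambda>c. K * P c) summable_on UNIV"
    using prod_summable[OF t1, where 'n='n] unfolding P_def
    by (intro summable_on_cmult_right)
  then have "(\<lambda>c. norm (h c) powr (-s)) summable_on UNIV"
    by (rule summable_on_comparison_test) (use bound in auto)
  moreover have "lattice_gen u = range h"
    unfolding lattice_gen_range by (simp add: h_def)
  ultimately show ?thesis
    using injh by (simp add: summable_on_reindex o_def)
qed



lemma zeta_summable':
  fixes u :: "'n::finite \<Rightarrow> real^'n"
  assumes "is_basis_family u" "s > real CARD('n)"
  shows "(\<lambda>q. norm q powr (-s)) summable_on (lattice_gen u - {0})"
  using zeta_summable[OF assms] by (rule summable_on_subset) auto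

lemma basis_in_lattice: "u i \<in> lattice_gen u"
proof -
  have "(\<Sum>j\<in>UNIV. of_int (if j = i then 1 else 0) *\<^sub>R u j) = (\<Sum>j\<in>UNIV. if j = i then u j else 0)"
    by (rule sum.cong) auto
  also have "\<dots> = u i" by simp
  finally have "(\<Sum>j\<in>UNIV. of_int (if j = i then 1 else 0) *\<^sub>R u j) = u i" .
  then show ?thesis unfolding lattice_gen_def
    by (intro CollectI exI[of _ "\<lambda>j. if j = i then 1 else 0"]) simp
qed

lemma basis_nonzero: "is_basis_family u \<Longrightarrow> u i \<noteq> 0"
  using real_vector.dependent_zero[of "range u"] by (auto simp: is_basis_family_def)

lemma zeta_pos:
  fixes u :: "'n::finite \<Rightarrow> real^'n"
  assumes bas: "is_basis_family u" and s: "s > real CARD('n)"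
  shows "epstein_zeta (lattice_gen u) s > 0"
proof -
  obtain i :: 'n where True by simp
  have ui: "u i \<in> lattice_gen u - {0}" using basis_in_lattice basis_nonzero[OF bas] by auto
  have "infsum (\<lambda>q. norm q powr (-s)) {u i} \<le> infsum (\<lambda>q. norm q powr (-s)) (lattice_gen u - {0})"
    using ui by (intro infsum_mono_neutral zeta_summable'[OF bas s]) auto
  moreover have "infsum (\<lambda>q. norm q powr (-s)) {u i} > 0"
    using basis_nonzero[OF bas] by simp
  ultimately show ?thesis unfolding epstein_zeta_def by linarith
qed

lemma scale_basis:
  fixes u :: "'n::finite \<Rightarrow> real^'n"
  assumes bas: "is_basis_family u" and t: "t > 0"
  shows "is_basis_family (\<lambda>i. t *\<^sub>R u i)"
    and "lattice_gen (\<lambda>i. t *\<^sub>R u i) = scale_lattice t (lattice_gen u)"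
proof -
  have R: "range (\<lambda>i. t *\<^sub>R u i) = (\<lambda>x. t *\<^sub>R x) ` range u" by auto
  have lin: "linear (\<lambda>x::real^'n. t *\<^sub>R x)" by (simp add: linear_scaleR_left linearI scaleR_add_right)
  have injs: "inj (\<lambda>x::real^'n. t *\<^sub>R x)" using t by (auto simp: inj_def)
  have "inj (\<lambda>i. t *\<^sub>R u i)" using bas t by (auto simp: is_basis_family_def inj_def)
  moreover have "independent (range (\<lambda>i. t *\<^sub>R u i))"
    unfolding R using bas injs
    by (intro real_vector.linear_independent_injective_image[OF lin])
       (auto simp: is_basis_family_def inj_on_def)
  moreover have "span (range (\<lambda>i. t *\<^sub>R u i)) = UNIV"
  proof -
    have "span (range (\<lambda>i. t *\<^sub>R u i)) = (\<lambda>x. t *\<^sub>R x) ` UNIV"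
      unfolding R real_vector.linear_span_image[OF lin] using bas by (simp add: is_basis_family_def)
    also have "\<dots> = UNIV"
    proof (safe)
      fix x :: "real^'n" show "x \<in> range (\<lambda>x. t *\<^sub>R x)"
        using t by (intro image_eqI[of _ _ "(1/t) *\<^sub>R x"]) auto
    qed auto
    finally show ?thesis .
  qed
  ultimately show "is_basis_family (\<lambda>i. t *\<^sub>R u i)" by (simp add: is_basis_family_def)
  show "lattice_gen (\<lambda>i. t *\<^sub>R u i) = scale_lattice t (lattice_gen u)"
  proof -
    have eq: "(\<Sum>i\<in>UNIV. of_int (c i) *\<^sub>R (t *\<^sub>R u i)) = t *\<^sub>R (\<Sum>i\<in>UNIV. of_int (c i) *\<^sub>R u i)" for c :: "'n \<Rightarrow> int"
      by (simp add: scaleR_sum_right mult.commute)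
    show ?thesis unfolding lattice_gen_def scale_lattice_def eq by blast
  qed
qed

lemma infsum_lin2:
  fixes f g :: "'a \<Rightarrow> real"
  assumes "f summable_on A" "g summable_on A"
  shows "infsum (\<lambda>x. c1 * f x + c2 * g x) A = c1 * infsum f A + c2 * infsum g A"
  using assms by (simp add: infsum_add summable_on_cmult_right infsum_cmult_right)

lemma energy_scale:
  fixes u :: "'n::finite \<Rightarrow> real^'n"
  assumes bas: "is_basis_family u" and al: "\<alpha> > real CARD('n)" and be: "\<beta> > real CARD('n)"
    and phi: "\<And>r. r > 0 \<Longrightarrow> \<phi> r = a * r powr (-\<alpha>) - b * r powr (-\<beta>)"
    and t: "t > 0"
  shows "lattice_energy \<phi> (scale_lattice t (lattice_gen u)) =
     a * t powr (-\<alpha>) * epstein_zeta (lattice_gen u) \<alpha> - b * t powr (-\<beta>) * epstein_zeta (lattice_gen u) \<beta>"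
proof -
  let ?L = "lattice_gen u"
  have S: "scale_lattice t ?L - {0} = (\<lambda>q. t *\<^sub>R q) ` (?L - {0})"
    using t unfolding scale_lattice_def by auto
  have inj: "inj_on (\<lambda>q::real^'n. t *\<^sub>R q) (?L - {0})" using t by (auto simp: inj_on_def)
  have "lattice_energy \<phi> (scale_lattice t ?L) = infsum (\<lambda>q. \<phi> (norm (t *\<^sub>R q))) (?L - {0})"
    unfolding lattice_energy_def S using inj by (simp add: infsum_reindex o_def)
  also have "\<dots> = infsum (\<lambda>q. (a * t powr (-\<alpha>)) * norm q powr (-\<alpha>) + (- (b * t powr (-\<beta>))) * norm q powr (-\<beta>)) (?L - {0})"
  proof (rule infsum_cong)
    fix q assume "q \<in> ?L - {0}"
    then have "norm q > 0" by simp
    then show "\<phi> (norm (t *\<^sub>R q)) = (a * t powr (-\<alpha>)) * norm q powr (-\<alpha>) + (- (b * t powr (-\<beta>))) * norm q powr (-\<beta>)"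
      using t by (simp add: phi powr_mult)
  qed
  also have "\<dots> = (a * t powr (-\<alpha>)) * epstein_zeta ?L \<alpha> + (- (b * t powr (-\<beta>))) * epstein_zeta ?L \<beta>"
    unfolding epstein_zeta_def
    using zeta_summable'[OF bas al] zeta_summable'[OF bas be] by (rule infsum_lin2)
  finally show ?thesis by simp
qed

lemma energy_at_lambda:
  fixes a b za zb \<alpha> \<beta> l :: real
  assumes "a > 0" "b > 0" "za > 0" "zb > 0" "\<alpha> > \<beta>" "\<beta> > 0"
    and l: "l = ((\<alpha> * a * za) / (\<beta> * b * zb)) powr (1 / (\<alpha> - \<beta>))"
  shows "l > 0" and "a * l powr (-\<alpha>) * za - b * l powr (-\<beta>) * zb = - (1 - \<beta>/\<alpha>) * b * zb * l powr (-\<beta>)"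
proof -
  have q: "(\<alpha> * a * za) / (\<beta> * b * zb) > 0" using assms by (intro divide_pos_pos mult_pos_pos) auto
  then show lp: "l > 0" unfolding l by (metis powr_gt_zero order_less_irrefl)
  have "l powr (\<alpha> - \<beta>) = (\<alpha> * a * za) / (\<beta> * b * zb)"
    using q assms by (simp add: l powr_powr)
  moreover have "l powr (-\<alpha>) = l powr (-\<beta>) / l powr (\<alpha> - \<beta>)"
    using lp by (subst powr_diff[symmetric]) simp
  ultimately have e: "l powr (-\<alpha>) = l powr (-\<beta>) / ((\<alpha> * a * za) / (\<beta> * b * zb))" by simp
  show "a * l powr (-\<alpha>) * za - b * l powr (-\<beta>) * zb = - (1 - \<beta>/\<alpha>) * b * zb * l powr (-\<beta>)"
    unfolding e using assms by (simp add: field_simps)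
qed



lemma scale_cancel:
  assumes "t \<noteq> 0" "scale_lattice t X = scale_lattice t (Y :: (real^'n::finite) set)"
  shows "X = Y"
proof -
  have "scale_lattice (1/t) (scale_lattice t Z) = Z" for Z :: "(real^'n) set"
    using assms(1) by (simp add: scale_lattice_def image_image)
  from this[of X] this[of Y] assms(2) show ?thesis by metis
qed

theorem proposition2p2:
  fixes Ld :: "(real^'n::finite) set"
    and a b \<alpha> \<beta> :: real
    and \<phi> :: "real \<Rightarrow> real"
  assumes "\<alpha> > \<beta>" and "\<beta> > real CARD('n)"
    and "a > 0" and "b > 0"
    and "\<And>r. r > 0 \<Longrightarrow> \<phi> r = a * r powr (-\<alpha>) - b * r powr (-\<beta>)"
    and "is_unimodular_lattice Ld"
    and "\<And>L::(real^'n) set. is_unimodular_lattice L \<Longrightarrow> epstein_zeta L \<beta> \<ge> epstein_zeta Ld \<beta>"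
    and "\<And>L::(real^'n) set. is_lattice L \<Longrightarrow>
           lattice_energy \<phi> L \<ge> lattice_energy \<phi> (scale_lattice (lj_lambda a b \<alpha> \<beta> Ld) Ld)"
    and "\<And>L::(real^'n) set. is_lattice L \<Longrightarrow>
           lattice_energy \<phi> L = lattice_energy \<phi> (scale_lattice (lj_lambda a b \<alpha> \<beta> Ld) Ld) \<Longrightarrow>
           isometric_lattices L (scale_lattice (lj_lambda a b \<alpha> \<beta> Ld) Ld)"
  shows "\<forall>L::(real^'n) set. is_unimodular_lattice L \<longrightarrow>
           lj_lambda a b \<alpha> \<beta> L \<ge> lj_lambda a b \<alpha> \<beta> Ld \<and>
           (lj_lambda a b \<alpha> \<beta> L = lj_lambda a b \<alpha> \<beta> Ld \<longrightarrow> isometric_lattices L Ld)"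
proof (intro allI impI)
  fix L :: "(real^'n) set"
  assume uL: "is_unimodular_lattice L"
  have al: "\<alpha> > real CARD('n)" using assms(1,2) by linarith
  have b0: "\<beta> > 0" using assms(2) by (smt (verit) of_nat_0_le_iff)
  have gen: "lj_lambda a b \<alpha> \<beta> M > 0 \<and> epstein_zeta M \<beta> > 0 \<and>
      is_lattice (scale_lattice (lj_lambda a b \<alpha> \<beta> M) M) \<and>
      lattice_energy \<phi> (scale_lattice (lj_lambda a b \<alpha> \<beta> M) M)
        = - (1 - \<beta>/\<alpha>) * b * epstein_zeta M \<beta> * lj_lambda a b \<alpha> \<beta> M powr (-\<beta>)"
    if uM: "is_unimodular_lattice M" for M :: "(real^'n) set"
  proof -
    obtain u where bas: "is_basis_family u" and M: "M = lattice_gen u"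
      using uM by (auto simp: is_unimodular_lattice_def)
    let ?l = "lj_lambda a b \<alpha> \<beta> M"
    have za: "epstein_zeta M \<alpha> > 0" using zeta_pos[OF bas al] M by simp
    have zb: "epstein_zeta M \<beta> > 0" using zeta_pos[OF bas assms(2)] M by simp
    note EL = energy_at_lambda[OF assms(3,4) za zb assms(1) b0, of ?l, OF lj_lambda_def]
    have lp: "?l > 0" by (rule EL(1))
    have "is_lattice (scale_lattice ?l M)"
      using scale_basis[OF bas lp] M unfolding is_lattice_def by metis
    moreover have "lattice_energy \<phi> (scale_lattice ?l M)
        = a * ?l powr (-\<alpha>) * epstein_zeta M \<alpha> - b * ?l powr (-\<beta>) * epstein_zeta M \<beta>"
      using energy_scale[OF bas al assms(2) assms(5) lp] M by simp
    ultimately show ?thesis using lp zb EL(2) by simp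
  qed
  let ?lL = "lj_lambda a b \<alpha> \<beta> L" and ?ld = "lj_lambda a b \<alpha> \<beta> Ld"
  let ?c = "(1 - \<beta>/\<alpha>) * b"
  have c0: "?c > 0" using assms(1,4) b0 by (simp add: field_simps)
  note gL = gen[OF uL] and gd = gen[OF assms(6)]
  have zz: "epstein_zeta L \<beta> \<ge> epstein_zeta Ld \<beta>" by (rule assms(7)[OF uL])
  have EE: "lattice_energy \<phi> (scale_lattice ?lL L) \<ge> lattice_energy \<phi> (scale_lattice ?ld Ld)"
    using assms(8) gL by blast
  then have ineq: "?c * epstein_zeta L \<beta> * ?lL powr (-\<beta>) \<le> ?c * epstein_zeta Ld \<beta> * ?ld powr (-\<beta>)"
    using gL gd by (simp add: algebra_simps)
  have ineq2: "?c * epstein_zeta Ld \<beta> * ?ld powr (-\<beta>) \<le> ?c * epstein_zeta L \<beta> * ?ld powr (-\<beta>)"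
    using zz c0 by (intro mult_right_mono mult_left_mono) auto
  have pw: "?lL powr (-\<beta>) \<le> ?ld powr (-\<beta>)"
  proof -
    have "?c * epstein_zeta L \<beta> * ?lL powr (-\<beta>) \<le> ?c * epstein_zeta L \<beta> * ?ld powr (-\<beta>)"
      using ineq ineq2 by linarith
    moreover have "?c * epstein_zeta L \<beta> > 0" using c0 gL by simp
    ultimately show ?thesis by (metis mult_le_cancel_left_pos)
  qed
  have ge: "?lL \<ge> ?ld"
  proof (rule ccontr)
    assume "\<not> ?lL \<ge> ?ld"
    then have "?lL < ?ld" by simp
    then have "?ld powr (-\<beta>) < ?lL powr (-\<beta>)"
      using gL b0 by (intro powr_less_mono2_neg) auto
    with pw show False by simp
  qed
  have eqc: "?lL = ?ld \<longrightarrow> isometric_lattices L Ld"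
  proof
    assume eq: "?lL = ?ld"
    have "lattice_energy \<phi> (scale_lattice ?lL L) = lattice_energy \<phi> (scale_lattice ?ld Ld)"
      using EE ineq2 gL gd eq by (simp add: algebra_simps)
    then have "isometric_lattices (scale_lattice ?lL L) (scale_lattice ?ld Ld)"
      using assms(9) gL by blast
    then obtain T where T: "orthogonal_transformation T" "T ` scale_lattice ?ld L = scale_lattice ?ld Ld"
      unfolding isometric_lattices_def eq by blast
    have lin: "linear T" using T(1) by (rule orthogonal_transformation_linear)
    have "scale_lattice ?ld (T ` L) = T ` scale_lattice ?ld L"
      unfolding scale_lattice_def image_image using linear_cmul[OF lin] by simp
    then have sc: "scale_lattice ?ld (T ` L) = scale_lattice ?ld Ld" using T(2) by simp
    have ld0: "?ld \<noteq> 0" using gd by linarith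
    have "T ` L = Ld" by (rule scale_cancel[OF ld0 sc])
    then show "isometric_lattices L Ld" using T(1) unfolding isometric_lattices_def by blast
  qed
  from ge eqc show "?lL \<ge> ?ld \<and> (?lL = ?ld \<longrightarrow> isometric_lattices L Ld)" by blast
qed


end
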